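(* Let $p+q=4k+2$ with $k\ge1$. (i) If $p,q$ are odd, $p\ge1$ and $q\ge5$, then $\mathbb{O}_{p,q}\simeq\mathbb{O}_{p+4,q-4}$. (ii) If $p,q$ are even, $p\ge4$ and $q\ge2$, then $\mathbb{O}_{p,q}\simeq\mathbb{O}_{p-2,q+2}$. (The isomorphisms preserve the $\mathbb{Z}_2^n$-graded structure.)
   Context: $\mathbb{Z}_2=\{0,1\}$. For $p+q=n\ge3$, $\mathbb{O}_{p,q}$ is the real algebra with basis $\{u_x: x\in\mathbb{Z}_2^n\}$ and product $u_x\cdot u_y=(-1)^{f(x,y)}u_{x+y}$, where $f(x,y)=\sum_{1\le i<j<k\le n}(x_ix_jy_k+x_iy_jx_k+y_ix_jx_k)+\sum_{1\le i\le j\le n}x_iy_j+\sum_{1\le i\le p}x_iy_i$. Homogeneous elements are scalar multiples of some $u_x$. *)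

theory Defs
  imports Complex_Main
begin

text \<open>An element x of Z_2^n is encoded as the set of indices i in {1..n} with x_i = 1;
  addition in Z_2^n is symmetric difference.\<close>

definition grades :: "nat \<Rightarrow> nat set set" where
  "grades n = Pow {1..n}"

definition zadd :: "nat set \<Rightarrow> nat set \<Rightarrow> nat set" where
  "zadd x y = (x - y) \<union> (y - x)"

definition ind :: "nat set \<Rightarrow> nat \<Rightarrow> nat" where
  "ind x i = (if i \<in> x then 1 else 0)"

definition twist :: "nat \<Rightarrow> nat \<Rightarrow> nat set \<Rightarrow> nat set \<Rightarrow> nat" where
  "twist p q x y =
     (\<Sum>i\<in>{1..p+q}. \<Sum>j\<in>{i<..p+q}. \<Sum>k\<in>{j<..p+q}.
         ind x i * ind x j * ind y k + ind x i * ind y j * ind x k + ind y i * ind x j * ind x k)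
   + (\<Sum>i\<in>{1..p+q}. \<Sum>j\<in>{i..p+q}. ind x i * ind y j)
   + (\<Sum>i\<in>{1..p}. ind x i * ind y i)"

text \<open>Elements of O_{p,q}: real coefficient functions on Z_2^n (coefficient of u_x at x),
  vanishing outside Z_2^n.\<close>
definition Ocarrier :: "nat \<Rightarrow> (nat set \<Rightarrow> real) set" where
  "Ocarrier n = {a. \<forall>x. x \<notin> grades n \<longrightarrow> a x = 0}"

text \<open>Bilinear extension of u_x \<cdot> u_y = (-1)^f(x,y) u_{x+y}.\<close>
definition Omult :: "nat \<Rightarrow> nat \<Rightarrow> (nat set \<Rightarrow> real) \<Rightarrow> (nat set \<Rightarrow> real) \<Rightarrow> (nat set \<Rightarrow> real)" where
  "Omult p q a b = (\<lambda>z. if z \<in> grades (p+q)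
      then (\<Sum>x\<in>grades (p+q). (-1) ^ twist p q x (zadd x z) * a x * b (zadd x z))
      else 0)"

definition homogeneous :: "nat \<Rightarrow> (nat set \<Rightarrow> real) \<Rightarrow> bool" where
  "homogeneous n a \<longleftrightarrow> a \<in> Ocarrier n \<and> (\<exists>x\<in>grades n. \<forall>y. y \<noteq> x \<longrightarrow> a y = 0)"

definition graded_iso :: "nat \<Rightarrow> nat \<Rightarrow> nat \<Rightarrow> nat \<Rightarrow> bool" where
  "graded_iso p q p' q' \<longleftrightarrow> (\<exists>\<phi>.
      bij_betw \<phi> (Ocarrier (p+q)) (Ocarrier (p'+q')) \<and>
      (\<forall>a\<in>Ocarrier (p+q). \<forall>b\<in>Ocarrier (p+q). \<phi> (\<lambda>x. a x + b x) = (\<lambda>x. \<phi> a x + \<phi> b x)) \<and>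
      (\<forall>a\<in>Ocarrier (p+q). \<forall>c::real. \<phi> (\<lambda>x. c * a x) = (\<lambda>x. c * \<phi> a x)) \<and>
      (\<forall>a\<in>Ocarrier (p+q). \<forall>b\<in>Ocarrier (p+q). \<phi> (Omult p q a b) = Omult p' q' (\<phi> a) (\<phi> b)) \<and>
      (\<forall>a. homogeneous (p+q) a \<longrightarrow> homogeneous (p'+q') (\<phi> a)))"

end

theory Submission
  imports Defs
begin


definition cub :: "nat \<Rightarrow> nat set \<Rightarrow> nat set \<Rightarrow> nat" where
  "cub n x y = (\<Sum>i\<in>{1..n}. \<Sum>j\<in>{i<..n}. \<Sum>k\<in>{j<..n}.
         ind x i * ind x j * ind y k + ind x i * ind y j * ind x k + ind y i * ind x j * ind x k)"
definition quad :: "nat \<Rightarrow> nat set \<Rightarrow> nat set \<Rightarrow> nat" where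
  "quad n x y = (\<Sum>i\<in>{1..n}. \<Sum>j\<in>{i..n}. ind x i * ind y j)"
definition ftw :: "nat \<Rightarrow> nat set \<Rightarrow> nat set \<Rightarrow> nat set \<Rightarrow> nat" where
  "ftw n P x y = cub n x y + quad n x y + card (x \<inter> y \<inter> P)"

lemma sum_ind: "finite A \<Longrightarrow> (\<Sum>i\<in>A. ind x i) = card (x \<inter> A)"
proof (induction A rule: finite_induct)
  case empty then show ?case by simp
next
  case (insert a A)
  have "x \<inter> insert a A = (if a \<in> x then insert a (x \<inter> A) else x \<inter> A)" by auto
  then show ?case using insert by (simp add: ind_def)
qed

lemma sum_ind2: "finite A \<Longrightarrow> (\<Sum>i\<in>A. ind x i * ind y i) = card (x \<inter> y \<inter> A)"
proof -
  assume "finite A"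
  have "\<And>i. ind x i * ind y i = ind (x \<inter> y) i" by (simp add: ind_def)
  then show ?thesis using sum_ind[OF \<open>finite A\<close>, of "x \<inter> y"] by simp
qed

lemma twist_eq: "twist p q x y = ftw (p+q) {1..p} x y"
  unfolding twist_def ftw_def cub_def quad_def by (simp add: sum_ind2)

lemma sum_ioc_Suc: "i \<le> n \<Longrightarrow> (\<Sum>j\<in>{i<..Suc n}. F j) = F (Suc n) + (\<Sum>j\<in>{i<..n}. F j)"
proof -
  assume "i \<le> n"
  then have "{i<..Suc n} = insert (Suc n) {i<..n}" by auto
  then show ?thesis by simp
qed

lemma sum_icc_Suc: "i \<le> Suc n \<Longrightarrow> (\<Sum>j\<in>{i..Suc n}. F j) = F (Suc n) + (\<Sum>j\<in>{i..n}. F j)"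
proof -
  assume "i \<le> Suc n"
  then have "{i..Suc n} = insert (Suc n) {i..n}" by auto
  then show ?thesis by simp
qed

lemma sum_1_Suc: "(\<Sum>i\<in>{1..Suc n}. F i) = F (Suc n) + (\<Sum>i\<in>{1..n}. F i)"
  by (simp add: add.commute)

definition pr2 :: "nat \<Rightarrow> nat set \<Rightarrow> nat set \<Rightarrow> nat" where
  "pr2 n x y = (\<Sum>i\<in>{1..n}. \<Sum>j\<in>{i<..n}. ind x i * ind y j)"

lemma pr2_Suc: "pr2 (Suc n) x y = pr2 n x y + ind y (Suc n) * card (x \<inter> {1..n})"
proof -
  have "pr2 (Suc n) x y = (\<Sum>i\<in>{1..n}. \<Sum>j\<in>{i<..Suc n}. ind x i * ind y j)"
    unfolding pr2_def by (simp add: sum_1_Suc)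
  also have "\<dots> = (\<Sum>i\<in>{1..n}. ind x i * ind y (Suc n) + (\<Sum>j\<in>{i<..n}. ind x i * ind y j))"
    by (rule sum.cong) (auto simp: sum_ioc_Suc)
  also have "\<dots> = pr2 n x y + ind y (Suc n) * card (x \<inter> {1..n})"
    by (simp add: sum.distrib pr2_def sum_distrib_right[symmetric] sum_ind)
  finally show ?thesis .
qed

lemma cub_Suc: "cub (Suc n) x y = cub n x y + ind y (Suc n) * pr2 n x x
     + ind x (Suc n) * (pr2 n x y + pr2 n y x)"
proof -
  let ?t = "\<lambda>i j k. ind x i * ind x j * ind y k + ind x i * ind y j * ind x k + ind y i * ind x j * ind x k"
  have "cub (Suc n) x y = (\<Sum>i\<in>{1..n}. \<Sum>j\<in>{i<..Suc n}. \<Sum>k\<in>{j<..Suc n}. ?t i j k)"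
    unfolding cub_def by (simp add: sum_1_Suc)
  also have "\<dots> = (\<Sum>i\<in>{1..n}. \<Sum>j\<in>{i<..n}. \<Sum>k\<in>{j<..Suc n}. ?t i j k)"
    by (rule sum.cong) (auto simp: sum_ioc_Suc)
  also have "\<dots> = (\<Sum>i\<in>{1..n}. \<Sum>j\<in>{i<..n}. ?t i j (Suc n) + (\<Sum>k\<in>{j<..n}. ?t i j k))"
    by (intro sum.cong refl) (auto simp: sum_ioc_Suc)
  also have "\<dots> = (\<Sum>i\<in>{1..n}. \<Sum>j\<in>{i<..n}. ?t i j (Suc n)) + cub n x y"
    by (simp add: sum.distrib cub_def)
  also have "(\<Sum>i\<in>{1..n}. \<Sum>j\<in>{i<..n}. ?t i j (Suc n)) =
       ind y (Suc n) * pr2 n x x + ind x (Suc n) * (pr2 n x y + pr2 n y x)"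
    by (simp add: pr2_def sum.distrib sum_distrib_left sum_distrib_right algebra_simps)
  finally show ?thesis by simp
qed

lemma card_Suc_ind: "card (x \<inter> {1..Suc n}) = card (x \<inter> {1..n}) + ind x (Suc n)"
proof -
  have "x \<inter> {1..Suc n} = (if Suc n \<in> x then insert (Suc n) (x \<inter> {1..n}) else x \<inter> {1..n})"
    by (auto simp: le_Suc_eq)
  then show ?thesis by (simp add: ind_def)
qed

lemma card_Suc_ind2: "card (x \<inter> y \<inter> {1..Suc n}) = card (x \<inter> y \<inter> {1..n}) + ind x (Suc n) * ind y (Suc n)"
  using card_Suc_ind[of "x \<inter> y" n] by (simp add: ind_def)

lemma ind_Int: "ind (x \<inter> y) i = ind x i * ind y i" by (simp add: ind_def)

lemma ind_01: "ind x i = 0 \<or> ind x i = 1" by (simp add: ind_def)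

lemma choose2_Suc: "Suc m choose 2 = (m choose 2) + m"
  by (simp add: numeral_2_eq_2)

lemma pr2_diag: "pr2 n x x = card (x \<inter> {1..n}) choose 2"
proof (induction n)
  case 0 then show ?case by (simp add: pr2_def)
next
  case (Suc n)
  have e: "pr2 (Suc n) x x = pr2 n x x + ind x (Suc n) * card (x \<inter> {1..n})" by (rule pr2_Suc)
  have f: "card (x \<inter> {1..Suc n}) = card (x \<inter> {1..n}) + ind x (Suc n)" by (rule card_Suc_ind)
  show ?case using ind_01[of x "Suc n"] unfolding e f Suc.IH
    by (metis add.right_neutral choose2_Suc mult_1 mult_zero_left plus_1_eq_Suc add.commute)
qed

lemma pr2_sym: "pr2 n x y + pr2 n y x + card (x \<inter> y \<inter> {1..n}) = card (x \<inter> {1..n}) * card (y \<inter> {1..n})"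
proof (induction n)
  case 0 then show ?case by (simp add: pr2_def)
next
  case (Suc n)
  have e1: "pr2 (Suc n) x y = pr2 n x y + ind y (Suc n) * card (x \<inter> {1..n})" by (rule pr2_Suc)
  have e2: "pr2 (Suc n) y x = pr2 n y x + ind x (Suc n) * card (y \<inter> {1..n})" by (rule pr2_Suc)
  show ?case unfolding e1 e2 card_Suc_ind2 card_Suc_ind
    using Suc.IH ind_01[of x "Suc n"] ind_01[of y "Suc n"]
    by (auto simp: algebra_simps ind_Int)
qed

lemma cub_par: "odd (cub n x y) \<longleftrightarrow>
   ((odd (card (y \<inter> {1..n})) \<and> odd (card (x \<inter> {1..n}) choose 2)) \<noteq>
    (odd (card (x \<inter> y \<inter> {1..n})) \<and> even (card (x \<inter> {1..n}))))"
proof (induction n)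
  case 0 then show ?case by (simp add: cub_def)
next
  case (Suc n)
  define a where "a = card (x \<inter> {1..n})"
  define b where "b = card (y \<inter> {1..n})"
  define c where "c = card (x \<inter> y \<inter> {1..n})"
  define u where "u = ind x (Suc n)"
  define v where "v = ind y (Suc n)"
  have m: "pr2 n x y + pr2 n y x + c = a * b" unfolding a_def b_def c_def by (rule pr2_sym)
  have o: "odd (pr2 n x y + pr2 n y x) \<longleftrightarrow> (odd (a * b) \<noteq> odd c)"
    using m by (metis odd_add)
  have e: "cub (Suc n) x y = cub n x y + v * (a choose 2) + u * (pr2 n x y + pr2 n y x)"
    unfolding cub_Suc pr2_diag a_def u_def v_def ..
  have IH: "odd (cub n x y) \<longleftrightarrow> ((odd b \<and> odd (a choose 2)) \<noteq> (odd c \<and> even a))"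
    using Suc.IH unfolding a_def b_def c_def .
  have A: "card (x \<inter> {1..Suc n}) = a + u" unfolding a_def u_def by (rule card_Suc_ind)
  have B: "card (y \<inter> {1..Suc n}) = b + v" unfolding b_def v_def by (rule card_Suc_ind)
  have C: "card (x \<inter> y \<inter> {1..Suc n}) = c + u * v" unfolding c_def u_def v_def by (rule card_Suc_ind2)
  show ?case unfolding e A B C using IH o ind_01[of x "Suc n"] ind_01[of y "Suc n"]
    unfolding u_def[symmetric] v_def[symmetric]
    by (auto simp: choose2_Suc)
qed

lemma quad_Suc: "quad (Suc n) x y = quad n x y + ind y (Suc n) * card (x \<inter> {1..Suc n})"
proof -
  have "quad (Suc n) x y = (\<Sum>i\<in>{1..Suc n}. ind x i * ind y (Suc n) + (\<Sum>j\<in>{i..n}. ind x i * ind y j))"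
    unfolding quad_def by (rule sum.cong) (auto simp: sum_icc_Suc)
  also have "\<dots> = ind y (Suc n) * card (x \<inter> {1..Suc n}) + (\<Sum>i\<in>{1..Suc n}. \<Sum>j\<in>{i..n}. ind x i * ind y j)"
  proof -
    have "(\<Sum>i\<in>{1..Suc n}. ind x i * ind y (Suc n)) = ind y (Suc n) * card (x \<inter> {1..Suc n})"
      unfolding sum_distrib_right[symmetric] sum_ind[OF finite_atLeastAtMost] by (rule mult.commute)
    then show ?thesis by (simp only: sum.distrib)
  qed
  also have "(\<Sum>i\<in>{1..Suc n}. \<Sum>j\<in>{i..n}. ind x i * ind y j) = quad n x y"
    by (simp add: sum_1_Suc quad_def)
  finally show ?thesis by simp
qed

lemma quad_sym: "quad n x y + quad n y x = card (x \<inter> {1..n}) * card (y \<inter> {1..n}) + card (x \<inter> y \<inter> {1..n})"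
proof (induction n)
  case 0 then show ?case by (simp add: quad_def)
next
  case (Suc n)
  have e1: "quad (Suc n) x y = quad n x y + ind y (Suc n) * card (x \<inter> {1..Suc n})" by (rule quad_Suc)
  have e2: "quad (Suc n) y x = quad n y x + ind x (Suc n) * card (y \<inter> {1..Suc n})" by (rule quad_Suc)
  show ?case unfolding e1 e2 card_Suc_ind2 card_Suc_ind
    using Suc.IH ind_01[of x "Suc n"] ind_01[of y "Suc n"]
    by (auto simp: algebra_simps ind_Int)
qed

lemma card_zadd_Int_exact: "finite C \<Longrightarrow>
   card (zadd A B \<inter> C) + 2 * card (A \<inter> B \<inter> C) = card (A \<inter> C) + card (B \<inter> C)"
proof -
  assume fC: "finite C"
  have d1: "zadd A B \<inter> C = ((A - B) \<inter> C) \<union> ((B - A) \<inter> C)" by (auto simp: zadd_def)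
  have "card (zadd A B \<inter> C) = card ((A - B) \<inter> C) + card ((B - A) \<inter> C)"
    unfolding d1 by (rule card_Un_disjoint) (use fC in auto)
  moreover have "card (A \<inter> C) = card ((A - B) \<inter> C) + card (A \<inter> B \<inter> C)"
  proof -
    have "A \<inter> C = ((A - B) \<inter> C) \<union> (A \<inter> B \<inter> C)" by auto
    then show ?thesis by (metis card_Un_disjoint fC finite_Int inf.commute Diff_disjoint
          Int_Diff Int_assoc inf_bot_right inf_left_commute)
  qed
  moreover have "card (B \<inter> C) = card ((B - A) \<inter> C) + card (A \<inter> B \<inter> C)"
  proof -
    have "B \<inter> C = ((B - A) \<inter> C) \<union> (A \<inter> B \<inter> C)" by auto
    moreover have "((B - A) \<inter> C) \<inter> (A \<inter> B \<inter> C) = {}" by auto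
    ultimately show ?thesis using fC by (metis card_Un_disjoint finite_Int inf.commute)
  qed
  ultimately show ?thesis by simp
qed

lemma card_zadd_Int: "finite C \<Longrightarrow>
   odd (card (zadd A B \<inter> C)) \<longleftrightarrow> (odd (card (A \<inter> C)) \<noteq> odd (card (B \<inter> C)))"
proof -
  assume "finite C"
  from card_zadd_Int_exact[OF this, of A B] show ?thesis by (metis even_add even_mult_iff even_numeral)
qed

lemma card_zadd: "finite A \<Longrightarrow> finite B \<Longrightarrow>
   odd (card (zadd A B)) \<longleftrightarrow> (odd (card A) \<noteq> odd (card B))"
proof -
  assume fA: "finite A" and fB: "finite B"
  have "zadd A B = zadd A B \<inter> (A \<union> B)" by (auto simp: zadd_def)
  then have "odd (card (zadd A B)) \<longleftrightarrow> (odd (card (A \<inter> (A \<union> B))) \<noteq> odd (card (B \<inter> (A \<union> B))))"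
    using card_zadd_Int[of "A \<union> B" A B] fA fB by simp
  moreover have "A \<inter> (A \<union> B) = A" "B \<inter> (A \<union> B) = B" by auto
  ultimately show ?thesis by simp
qed

lemma choose_add: "(u + v) choose 2 = (u choose 2) + (v choose 2) + u * (v::nat)"
  by (induction v) (auto simp: choose2_Suc)

lemma choose_double_par: "odd ((c + c) choose 2) \<longleftrightarrow> odd (c::nat)"
  unfolding choose_add by simp

lemma choose_zadd: "finite A \<Longrightarrow> finite B \<Longrightarrow>
   odd (card (zadd A B) choose 2) \<longleftrightarrow>
     (((odd (card A choose 2) \<noteq> odd (card B choose 2)) \<noteq> (odd (card A) \<and> odd (card B))) \<noteq> odd (card (A \<inter> B)))"
proof -
  assume fA: "finite A" and fB: "finite B"
  have e: "card (zadd A B) + 2 * card (A \<inter> B) = card A + card B"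
  proof -
    have "zadd A B \<inter> (A \<union> B) = zadd A B" "A \<inter> (A \<union> B) = A" "B \<inter> (A \<union> B) = B"
      "A \<inter> B \<inter> (A \<union> B) = A \<inter> B" by (auto simp: zadd_def)
    then show ?thesis using card_zadd_Int_exact[of "A \<union> B" A B] fA fB by simp
  qed
  define m where "m = card (zadd A B)"
  define c where "c = card (A \<inter> B)"
  have e2: "card A + card B = m + (c + c)" using e unfolding m_def c_def by simp
  have "odd ((card A + card B) choose 2) \<longleftrightarrow> (odd (m choose 2) \<noteq> odd c)"
    unfolding e2 choose_add by (simp add: choose_double_par[unfolded choose_add])
  moreover have "odd ((card A + card B) choose 2) \<longleftrightarrow>
      ((odd (card A choose 2) \<noteq> odd (card B choose 2)) \<noteq> (odd (card A) \<and> odd (card B)))"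
    unfolding choose_add by simp blast
  ultimately show ?thesis unfolding m_def c_def by auto
qed



lemma ind_zadd: "ind (zadd A B) i = (if odd (ind A i + ind B i) then 1 else 0)"
  by (simp add: ind_def zadd_def)

lemma quad_lin1: "odd (quad n (zadd A B) C) \<longleftrightarrow> (odd (quad n A C) \<noteq> odd (quad n B C))"
proof (induction n)
  case 0 then show ?case by (simp add: quad_def)
next
  case (Suc n)
  have z: "odd (card (zadd A B \<inter> {1..Suc n})) \<longleftrightarrow> (odd (card (A \<inter> {1..Suc n})) \<noteq> odd (card (B \<inter> {1..Suc n})))"
    by (rule card_zadd_Int) simp
  show ?case unfolding quad_Suc[of n] using Suc.IH z ind_01[of C "Suc n"] by auto
qed

lemma quad_lin2: "odd (quad n A (zadd B C)) \<longleftrightarrow> (odd (quad n A B) \<noteq> odd (quad n A C))"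
proof (induction n)
  case 0 then show ?case by (simp add: quad_def)
next
  case (Suc n)
  show ?case unfolding quad_Suc[of n] using Suc.IH ind_01[of B "Suc n"] ind_01[of C "Suc n"]
    by (auto simp: ind_zadd)
qed

definition ISO :: "nat \<Rightarrow> nat set \<Rightarrow> nat set \<Rightarrow> bool" where
  "ISO n P P' \<longleftrightarrow> (\<exists>\<sigma> e. bij_betw \<sigma> (grades n) (grades n) \<and>
     (\<forall>x\<in>grades n. \<forall>y\<in>grades n. \<sigma> (zadd x y) = zadd (\<sigma> x) (\<sigma> y)) \<and>
     (\<forall>x\<in>grades n. \<forall>y\<in>grades n. even (ftw n P' (\<sigma> x) (\<sigma> y) + ftw n P x y + e x + e y + e (zadd x y))))"

lemma zadd_grades: "x \<in> grades n \<Longrightarrow> y \<in> grades n \<Longrightarrow> zadd x y \<in> grades n"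
  by (auto simp: grades_def zadd_def)

lemma zadd_cancel: "zadd x (zadd x w) = w"
  by (auto simp: zadd_def)

lemma zadd_comm: "zadd x y = zadd y x"
  by (auto simp: zadd_def)

lemma neg1_par: "even (u + v) \<Longrightarrow> (-1::real) ^ u = (-1) ^ v"
  by (simp add: minus_one_power_iff)

lemma ISO_graded:
  assumes iso: "ISO (p+q) {1..p} {1..p'}" and nn: "p' + q' = p + q"
  shows "graded_iso p q p' q'"
proof -
  define n where "n = p + q"
  define G where "G = grades n"
  obtain \<sigma> e where bij: "bij_betw \<sigma> G G" and lin: "\<forall>x\<in>G. \<forall>y\<in>G. \<sigma> (zadd x y) = zadd (\<sigma> x) (\<sigma> y)"
    and coc: "\<forall>x\<in>G. \<forall>y\<in>G. even (ftw n {1..p'} (\<sigma> x) (\<sigma> y) + ftw n {1..p} x y + e x + e y + e (zadd x y))"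
    using iso unfolding ISO_def G_def n_def by blast
  define \<tau> where "\<tau> = inv_into G \<sigma>"
  have \<tau>G: "z \<in> G \<Longrightarrow> \<tau> z \<in> G" for z using bij unfolding \<tau>_def
    by (metis bij_betw_def inv_into_into)
  have \<sigma>G: "x \<in> G \<Longrightarrow> \<sigma> x \<in> G" for x using bij by (meson bij_betwE)
  have \<sigma>\<tau>: "z \<in> G \<Longrightarrow> \<sigma> (\<tau> z) = z" for z using bij unfolding \<tau>_def
    by (meson bij_betw_inv_into_right)
  have \<tau>\<sigma>: "x \<in> G \<Longrightarrow> \<tau> (\<sigma> x) = x" for x using bij unfolding \<tau>_def
    by (meson bij_betw_inv_into_left)
  define \<epsilon> where "\<epsilon> x = (-1::real) ^ e x" for x
  have \<epsilon>sq: "\<epsilon> x * \<epsilon> x = 1" for x unfolding \<epsilon>_def by (simp add: power_mult_distrib[symmetric])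
  have cocr: "(-1::real) ^ ftw n {1..p'} (\<sigma> x) (\<sigma> y) * \<epsilon> x * \<epsilon> y = \<epsilon> (zadd x y) * (-1) ^ ftw n {1..p} x y"
    if "x \<in> G" "y \<in> G" for x y
  proof -
    have ev: "even (ftw n {1..p'} (\<sigma> x) (\<sigma> y) + ftw n {1..p} x y + e x + e y + e (zadd x y))"
      using coc that by blast
    have "even ((ftw n {1..p'} (\<sigma> x) (\<sigma> y) + e x + e y) + (ftw n {1..p} x y + e (zadd x y)))"
      using ev by presburger
    then have "(-1::real) ^ (ftw n {1..p'} (\<sigma> x) (\<sigma> y) + e x + e y) = (-1) ^ (ftw n {1..p} x y + e (zadd x y))"
      by (rule neg1_par)
    then have "(-1::real) ^ ftw n {1..p'} (\<sigma> x) (\<sigma> y) * (-1) ^ e x * (-1) ^ e y = (-1) ^ ftw n {1..p} x y * (-1) ^ e (zadd x y)"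
      by (simp only: power_add)
    then show ?thesis unfolding \<epsilon>_def by (simp only: mult.commute)
  qed
  define \<phi> where "\<phi> a = (\<lambda>z. if z \<in> G then \<epsilon> (\<tau> z) * a (\<tau> z) else 0)" for a :: "nat set \<Rightarrow> real"
  define \<psi> where "\<psi> b = (\<lambda>x. if x \<in> G then \<epsilon> x * b (\<sigma> x) else 0)" for b :: "nat set \<Rightarrow> real"
  have carr: "Ocarrier n = {a. \<forall>x. x \<notin> G \<longrightarrow> a x = 0}" unfolding Ocarrier_def G_def ..
  have nn': "p' + q' = n" using nn n_def by simp
  have bijphi: "bij_betw \<phi> (Ocarrier n) (Ocarrier n)"
  proof (rule bij_betw_byWitness[where f' = \<psi>])
    show "\<forall>a\<in>Ocarrier n. \<psi> (\<phi> a) = a"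
      unfolding carr \<phi>_def \<psi>_def using \<sigma>G \<tau>\<sigma> \<epsilon>sq by (auto simp: fun_eq_iff mult.assoc[symmetric])
    show "\<forall>b\<in>Ocarrier n. \<phi> (\<psi> b) = b"
      unfolding carr \<phi>_def \<psi>_def using \<tau>G \<sigma>\<tau> \<epsilon>sq by (auto simp: fun_eq_iff mult.assoc[symmetric])
    show "\<phi> ` Ocarrier n \<subseteq> Ocarrier n" unfolding carr \<phi>_def by auto
    show "\<psi> ` Ocarrier n \<subseteq> Ocarrier n" unfolding carr \<psi>_def by auto
  qed
  have mult: "\<phi> (Omult p q a b) = Omult p' q' (\<phi> a) (\<phi> b)" if "a \<in> Ocarrier n" "b \<in> Ocarrier n" for a b
  proof (rule ext)
    fix z
    show "\<phi> (Omult p q a b) z = Omult p' q' (\<phi> a) (\<phi> b) z"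
    proof (cases "z \<in> G")
      case False then show ?thesis unfolding \<phi>_def Omult_def nn' n_def[symmetric] G_def by simp
    next
      case True
      define w where "w = \<tau> z"
      have wG: "w \<in> G" using True \<tau>G w_def by simp
      have zw: "z = \<sigma> w" using True \<sigma>\<tau> w_def by simp
      have "Omult p' q' (\<phi> a) (\<phi> b) z =
          (\<Sum>x'\<in>G. (-1) ^ ftw n {1..p'} x' (zadd x' z) * \<phi> a x' * \<phi> b (zadd x' z))"
        using True unfolding Omult_def nn' twist_eq G_def by simp
      also have "\<dots> = (\<Sum>x\<in>G. (-1) ^ ftw n {1..p'} (\<sigma> x) (zadd (\<sigma> x) z) * \<phi> a (\<sigma> x) * \<phi> b (zadd (\<sigma> x) z))"
        using sum.reindex_bij_betw[OF bij, symmetric] by simp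
      also have "\<dots> = (\<Sum>x\<in>G. \<epsilon> w * ((-1) ^ ftw n {1..p} x (zadd x w) * a x * b (zadd x w)))"
      proof (rule sum.cong[OF refl])
        fix x assume xG: "x \<in> G"
        define y where "y = zadd x w"
        have yG: "y \<in> G" unfolding y_def G_def using xG wG G_def zadd_grades by simp
        have zz: "zadd (\<sigma> x) z = \<sigma> y" unfolding y_def zw using lin xG wG by simp
        have xy: "zadd x y = w" unfolding y_def by (rule zadd_cancel)
        have "(-1) ^ ftw n {1..p'} (\<sigma> x) (zadd (\<sigma> x) z) * \<phi> a (\<sigma> x) * \<phi> b (zadd (\<sigma> x) z)
            = ((-1::real) ^ ftw n {1..p'} (\<sigma> x) (\<sigma> y) * \<epsilon> x * \<epsilon> y) * a x * b y"
          unfolding zz \<phi>_def using xG yG \<sigma>G \<tau>\<sigma> by (simp add: ac_simps)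
        also have "\<dots> = \<epsilon> w * ((-1) ^ ftw n {1..p} x y * a x * b y)"
          unfolding cocr[OF xG yG] xy by (simp add: ac_simps)
        finally show "(-1) ^ ftw n {1..p'} (\<sigma> x) (zadd (\<sigma> x) z) * \<phi> a (\<sigma> x) * \<phi> b (zadd (\<sigma> x) z)
            = \<epsilon> w * ((-1) ^ ftw n {1..p} x (zadd x w) * a x * b (zadd x w))" unfolding y_def .
      qed
      also have "\<dots> = \<phi> (Omult p q a b) z"
        unfolding \<phi>_def Omult_def n_def[symmetric] G_def[symmetric] twist_eq
        using True wG w_def by (simp add: sum_distrib_left)
      finally show ?thesis by simp
    qed
  qed
  have hom: "homogeneous n (\<phi> a)" if ha: "homogeneous n a" for a
  proof -
    obtain x0 where x0: "x0 \<in> G" "\<forall>y. y \<noteq> x0 \<longrightarrow> a y = 0" and ac: "a \<in> Ocarrier n"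
      using ha unfolding homogeneous_def G_def by blast
    have "\<phi> a \<in> Ocarrier n" using bijphi ac unfolding bij_betw_def by blast
    moreover have "\<forall>y. y \<noteq> \<sigma> x0 \<longrightarrow> \<phi> a y = 0"
    proof (intro allI impI)
      fix y assume yn: "y \<noteq> \<sigma> x0"
      show "\<phi> a y = 0"
      proof (cases "y \<in> G")
        case True
        then have "\<tau> y \<noteq> x0" using yn \<sigma>\<tau> by metis
        then show ?thesis using x0 unfolding \<phi>_def by simp
      qed (simp add: \<phi>_def)
    qed
    ultimately show ?thesis unfolding homogeneous_def G_def[symmetric] using \<sigma>G x0 by blast
  qed
  show ?thesis unfolding graded_iso_def
  proof (intro exI[of _ \<phi>] conjI)
    show "bij_betw \<phi> (Ocarrier (p + q)) (Ocarrier (p' + q'))" using bijphi nn' n_def by simp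
    show "\<forall>a\<in>Ocarrier (p + q). \<forall>b\<in>Ocarrier (p + q). \<phi> (\<lambda>x. a x + b x) = (\<lambda>x. \<phi> a x + \<phi> b x)"
      unfolding \<phi>_def by (auto simp: fun_eq_iff algebra_simps)
    show "\<forall>a\<in>Ocarrier (p + q). \<forall>c. \<phi> (\<lambda>x. c * a x) = (\<lambda>x. c * \<phi> a x)"
      unfolding \<phi>_def by (auto simp: fun_eq_iff algebra_simps)
    show "\<forall>a\<in>Ocarrier (p + q). \<forall>b\<in>Ocarrier (p + q). \<phi> (Omult p q a b) = Omult p' q' (\<phi> a) (\<phi> b)"
      using mult n_def by simp
    show "\<forall>a. homogeneous (p + q) a \<longrightarrow> homogeneous (p' + q') (\<phi> a)"
      using hom n_def nn' by simp
  qed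
qed

lemma ISO_trans: assumes "ISO n P P'" "ISO n P' P''" shows "ISO n P P''"
proof -
  obtain \<sigma> e where b1: "bij_betw \<sigma> (grades n) (grades n)"
    and l1: "\<forall>x\<in>grades n. \<forall>y\<in>grades n. \<sigma> (zadd x y) = zadd (\<sigma> x) (\<sigma> y)"
    and c1: "\<forall>x\<in>grades n. \<forall>y\<in>grades n. even (ftw n P' (\<sigma> x) (\<sigma> y) + ftw n P x y + e x + e y + e (zadd x y))"
    using assms(1) unfolding ISO_def by blast
  obtain \<sigma>' e' where b2: "bij_betw \<sigma>' (grades n) (grades n)"
    and l2: "\<forall>x\<in>grades n. \<forall>y\<in>grades n. \<sigma>' (zadd x y) = zadd (\<sigma>' x) (\<sigma>' y)"
    and c2: "\<forall>x\<in>grades n. \<forall>y\<in>grades n. even (ftw n P'' (\<sigma>' x) (\<sigma>' y) + ftw n P' x y + e' x + e' y + e' (zadd x y))"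
    using assms(2) unfolding ISO_def by blast
  have sG: "x \<in> grades n \<Longrightarrow> \<sigma> x \<in> grades n" for x using b1 by (meson bij_betwE)
  show ?thesis unfolding ISO_def
  proof (intro exI[of _ "\<sigma>' \<circ> \<sigma>"] exI[of _ "\<lambda>x. e x + e' (\<sigma> x)"] conjI ballI)
    show "bij_betw (\<sigma>' \<circ> \<sigma>) (grades n) (grades n)" using b1 b2 by (rule bij_betw_trans)
  next
    fix x y assume x: "x \<in> grades n" and y: "y \<in> grades n"
    show "(\<sigma>' \<circ> \<sigma>) (zadd x y) = zadd ((\<sigma>' \<circ> \<sigma>) x) ((\<sigma>' \<circ> \<sigma>) y)"
      using l1 l2 x y sG by simp
  next
    fix x y assume x: "x \<in> grades n" and y: "y \<in> grades n"
    have A: "even (ftw n P' (\<sigma> x) (\<sigma> y) + ftw n P x y + e x + e y + e (zadd x y))" using c1 x y by blast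
    have B: "even (ftw n P'' (\<sigma>' (\<sigma> x)) (\<sigma>' (\<sigma> y)) + ftw n P' (\<sigma> x) (\<sigma> y) + e' (\<sigma> x) + e' (\<sigma> y) + e' (\<sigma> (zadd x y)))"
      using c2 sG x y l1 by simp
    show "even (ftw n P'' ((\<sigma>' \<circ> \<sigma>) x) ((\<sigma>' \<circ> \<sigma>) y) + ftw n P x y + (e x + e' (\<sigma> x)) + (e y + e' (\<sigma> y)) +
          (e (zadd x y) + e' (\<sigma> (zadd x y))))"
      using A B by simp presburger
  qed
qed

lemma L1: "finite D \<Longrightarrow> odd (card (zadd A B \<inter> C \<inter> D)) \<longleftrightarrow> (odd (card (A \<inter> C \<inter> D)) \<noteq> odd (card (B \<inter> C \<inter> D)))"
  using card_zadd_Int[of "C \<inter> D" A B] by (simp add: Int_assoc)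

lemma L2: "finite D \<Longrightarrow> odd (card (A \<inter> zadd B C \<inter> D)) \<longleftrightarrow> (odd (card (A \<inter> B \<inter> D)) \<noteq> odd (card (A \<inter> C \<inter> D)))"
proof -
  assume "finite D"
  have "A \<inter> zadd B C \<inter> D = zadd B C \<inter> (A \<inter> D)" "B \<inter> (A \<inter> D) = A \<inter> B \<inter> D" "C \<inter> (A \<inter> D) = A \<inter> C \<inter> D"
    by auto
  then show ?thesis using card_zadd_Int[of "A \<inter> D" B C] \<open>finite D\<close> by simp
qed

lemma exp3: "finite D \<Longrightarrow>
  odd (card ((if a then zadd x V else x) \<inter> (if b then zadd y V else y) \<inter> D)) \<longleftrightarrow>
   (((odd (card (x \<inter> y \<inter> D)) \<noteq> (b \<and> odd (card (x \<inter> V \<inter> D)))) \<noteq> (a \<and> odd (card (V \<inter> y \<inter> D))))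
     \<noteq> (a \<and> b \<and> odd (card (V \<inter> V \<inter> D))))"
  by (cases a; cases b; simp add: L1 L2; argo)

lemma expq: "odd (quad n (if a then zadd x V else x) (if b then zadd y V else y)) \<longleftrightarrow>
   (((odd (quad n x y) \<noteq> (b \<and> odd (quad n x V))) \<noteq> (a \<and> odd (quad n V y)))
     \<noteq> (a \<and> b \<and> odd (quad n V V)))"
  by (cases a; cases b; simp add: quad_lin1 quad_lin2; argo)

lemma ftw_par: "odd (ftw n P x y) \<longleftrightarrow> ((odd (cub n x y) \<noteq> odd (quad n x y)) \<noteq> odd (card (x \<inter> y \<inter> P)))"
  unfolding ftw_def by simp argo



lemma cub_par': "x \<subseteq> {1..n} \<Longrightarrow> y \<subseteq> {1..n} \<Longrightarrow> odd (cub n x y) \<longleftrightarrow>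
   ((odd (card y) \<and> odd (card x choose 2)) \<noteq> (odd (card (x \<inter> y)) \<and> even (card x)))"
proof -
  assume "x \<subseteq> {1..n}" "y \<subseteq> {1..n}"
  then have "x \<inter> {1..n} = x" "y \<inter> {1..n} = y" "x \<inter> y \<inter> {1..n} = x \<inter> y" by auto
  then show ?thesis using cub_par[of n x y] by simp
qed

lemma flip:
  fixes n :: nat and S P :: "nat set"
  assumes n4: "n mod 4 = 2" and SS: "S \<subseteq> {1..n}" and cS: "card S = 4" and PS: "P \<subseteq> {1..n}"
    and oP: "odd (card (P - S))"
  shows "ISO n P (zadd P S)"
proof -
  define V where "V = {1..n} - S"
  define G where "G = grades n"
  define \<sigma> where "\<sigma> x = (if odd (card (x \<inter> S)) then zadd x V else x)" for x
  define mu where "mu x = quad n V x + card (x \<inter> V) + card (x \<inter> V \<inter> P)" for x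
  define e where "e x = (card (x \<inter> S) choose 2) + card (x \<inter> S) * mu x" for x
  have fS: "finite S" using SS finite_subset by blast
  have fV: "finite V" unfolding V_def by simp
  have VS: "V \<inter> S = {}" unfolding V_def by auto
  have Vn: "V \<subseteq> {1..n}" unfolding V_def by auto
  have c4: "card S \<le> n" using card_mono[OF _ SS] by simp
  have cV: "card V = n - 4" unfolding V_def using card_Diff_subset[OF fS SS] cS by simp
  have cV4: "card V + 4 = n" using cV c4 cS by simp
  have cVm: "card V mod 4 = 2" using n4 cV4 by (metis mod_add_self2)
  obtain m where vm: "card V = 4 * m + 2" using cVm by (metis div_mult_mod_eq mult.commute)
  have Veven: "even (card V)" using vm by simp
  have Vc2: "odd (card V choose 2)"
  proof -
    have "card V = (2*m+1) + (2*m+1)" using vm by simp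
    then show ?thesis using choose_double_par[of "2*m+1"] by simp
  qed
  have qVV: "odd (quad n V V)"
  proof -
    have "V \<inter> {1..n} = V" "V \<inter> V \<inter> {1..n} = V" using Vn by auto
    then have "quad n V V + quad n V V = card V * card V + card V" using quad_sym[of n V V] by simp
    then have "quad n V V + quad n V V = (4*m+2)*(4*m+2) + (4*m+2)" using vm by simp
    then have "quad n V V = 8*m*m + 10*m + 3" by (simp add: algebra_simps)
    then show ?thesis by simp
  qed
  have sub: "x \<in> G \<Longrightarrow> x \<subseteq> {1..n}" for x unfolding G_def grades_def by simp
  have fin: "x \<in> G \<Longrightarrow> finite x" for x using sub finite_subset by blast
  have SV: "x \<inter> S \<inter> V = {}" "zadd x V \<inter> S = x \<inter> S" for x using VS by (auto simp: zadd_def)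
  have \<sigma>G: "\<sigma> x \<in> G" if "x \<in> G" for x
    using sub[OF that] Vn unfolding \<sigma>_def G_def grades_def by (auto simp: zadd_def)
  have zz: "zadd (zadd x V) V = x" for x by (auto simp: zadd_def)
  have \<sigma>\<sigma>: "\<sigma> (\<sigma> x) = x" for x
  proof (cases "odd (card (x \<inter> S))")
    case True
    then have "\<sigma> x = zadd x V" by (simp add: \<sigma>_def)
    moreover have "odd (card (zadd x V \<inter> S))" using True SV(2) by simp
    ultimately show ?thesis by (simp add: \<sigma>_def zz)
  next
    case False
    then show ?thesis by (simp add: \<sigma>_def)
  qed
  have bij: "bij_betw \<sigma> G G"
    by (rule bij_betw_byWitness[where f' = \<sigma>]) (use \<sigma>\<sigma> \<sigma>G in auto)
  have lin: "\<sigma> (zadd x y) = zadd (\<sigma> x) (\<sigma> y)" if "x \<in> G" "y \<in> G" for x y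
  proof -
    have p: "odd (card (zadd x y \<inter> S)) \<longleftrightarrow> (odd (card (x \<inter> S)) \<noteq> odd (card (y \<inter> S)))"
      using card_zadd_Int[OF fS] by blast
    show ?thesis unfolding \<sigma>_def p
      by (cases "odd (card (x \<inter> S))"; cases "odd (card (y \<inter> S))") (auto simp: zadd_def)
  qed
  have main: "even (ftw n (zadd P S) (\<sigma> x) (\<sigma> y) + ftw n P x y + e x + e y + e (zadd x y))"
    if xG: "x \<in> G" and yG: "y \<in> G" for x y
  proof -
    let ?a = "odd (card (x \<inter> S))" and ?b = "odd (card (y \<inter> S))"
    let ?X = "if ?a then zadd x V else x" and ?Y = "if ?b then zadd y V else y"
    let ?P' = "zadd P S"
    have sX: "\<sigma> x = ?X" "\<sigma> y = ?Y" unfolding \<sigma>_def by simp_all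
    have xn: "x \<subseteq> {1..n}" and yn: "y \<subseteq> {1..n}" using sub xG yG by auto
    have fx: "finite x" and fy: "finite y" using fin xG yG by auto
    have Xn: "?X \<subseteq> {1..n}" "?Y \<subseteq> {1..n}" using \<sigma>G[OF xG] \<sigma>G[OF yG] sub sX by auto
    have fP': "finite ?P'" using PS fS by (auto simp: zadd_def intro: finite_subset)
    have t1: "odd (ftw n ?P' ?X ?Y) \<longleftrightarrow> ((odd (cub n ?X ?Y) \<noteq> odd (quad n ?X ?Y)) \<noteq> odd (card (?X \<inter> ?Y \<inter> ?P')))"
      by (rule ftw_par)
    have t2: "odd (cub n ?X ?Y) \<longleftrightarrow> ((odd (card ?Y) \<and> odd (card ?X choose 2)) \<noteq> (odd (card (?X \<inter> ?Y)) \<and> even (card ?X)))"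
      using cub_par' Xn by blast
    have cx: "odd (card ?X) \<longleftrightarrow> odd (card x)"
      using card_zadd[OF fx fV] Veven by simp
    have cy: "odd (card ?Y) \<longleftrightarrow> odd (card y)"
      using card_zadd[OF fy fV] Veven by simp
    have cx2: "odd (card ?X choose 2) \<longleftrightarrow> (odd (card x choose 2) \<noteq> (?a \<and> \<not> odd (card (x \<inter> V))))"
      using choose_zadd[OF fx fV] Veven Vc2 by (cases ?a) auto
    have i1: "x \<inter> y \<inter> {1..n} = x \<inter> y" "x \<inter> V \<inter> {1..n} = x \<inter> V" "V \<inter> y \<inter> {1..n} = y \<inter> V"
      "V \<inter> V \<inter> {1..n} = V" "?X \<inter> ?Y \<inter> {1..n} = ?X \<inter> ?Y"
      using xn yn Vn Xn by auto
    have cxy: "odd (card (?X \<inter> ?Y)) \<longleftrightarrow> (((odd (card (x \<inter> y)) \<noteq> (?b \<and> odd (card (x \<inter> V)))) \<noteq> (?a \<and> odd (card (y \<inter> V))))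
     \<noteq> (?a \<and> ?b \<and> odd (card V)))"
      using exp3[of "{1..n}" ?a x V ?b y] unfolding i1 by simp
    have tq: "odd (quad n ?X ?Y) \<longleftrightarrow> (((odd (quad n x y) \<noteq> (?b \<and> odd (quad n x V))) \<noteq> (?a \<and> odd (quad n V y)))
     \<noteq> (?a \<and> ?b \<and> odd (quad n V V)))"
      by (rule expq)
    have qxV: "odd (quad n x V) \<longleftrightarrow> (odd (quad n V x) \<noteq> odd (card (x \<inter> V)))"
    proof -
      have "x \<inter> {1..n} = x" "V \<inter> {1..n} = V" "x \<inter> V \<inter> {1..n} = x \<inter> V" using xn Vn by auto
      then have "quad n x V + quad n V x = card x * card V + card (x \<inter> V)" using quad_sym[of n x V] by simp
      then show ?thesis using Veven by (metis even_add even_mult_iff)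
    qed
    have i2: "x \<inter> V \<inter> ?P' = x \<inter> V \<inter> P" "V \<inter> y \<inter> ?P' = y \<inter> V \<inter> P" "V \<inter> V \<inter> ?P' = P - S"
      using VS PS unfolding V_def by (auto simp: zadd_def)
    have tL: "odd (card (?X \<inter> ?Y \<inter> ?P')) \<longleftrightarrow> (((odd (card (x \<inter> y \<inter> ?P')) \<noteq> (?b \<and> odd (card (x \<inter> V \<inter> P)))) \<noteq> (?a \<and> odd (card (y \<inter> V \<inter> P))))
     \<noteq> (?a \<and> ?b \<and> odd (card (P - S))))"
      using exp3[OF fP', of ?a x V ?b y] unfolding i2 by simp
    have tL2: "odd (card (x \<inter> y \<inter> ?P')) \<longleftrightarrow> (odd (card (x \<inter> y \<inter> P)) \<noteq> odd (card (x \<inter> y \<inter> S)))"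
    proof -
      have "x \<inter> y \<inter> ?P' = zadd P S \<inter> (x \<inter> y)" "P \<inter> (x \<inter> y) = x \<inter> y \<inter> P" "S \<inter> (x \<inter> y) = x \<inter> y \<inter> S" by auto
      then show ?thesis using card_zadd_Int[of "x \<inter> y" P S] fx by simp
    qed
    have s1: "odd (ftw n P x y) \<longleftrightarrow> ((odd (cub n x y) \<noteq> odd (quad n x y)) \<noteq> odd (card (x \<inter> y \<inter> P)))"
      by (rule ftw_par)
    have s2: "odd (cub n x y) \<longleftrightarrow> ((odd (card y) \<and> odd (card x choose 2)) \<noteq> (odd (card (x \<inter> y)) \<and> even (card x)))"
      using cub_par' xn yn by blast
    have dx: "odd (card x) \<longleftrightarrow> (?a \<noteq> odd (card (x \<inter> V)))"
    proof -
      have e1: "x = (x \<inter> S) \<union> (x \<inter> V)" using xn unfolding V_def by auto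
      have "card ((x \<inter> S) \<union> (x \<inter> V)) = card (x \<inter> S) + card (x \<inter> V)"
        by (rule card_Un_disjoint) (use fx VS in auto)
      then have "card x = card (x \<inter> S) + card (x \<inter> V)" using e1 by simp
      then show ?thesis by simp
    qed
    have dy: "odd (card y) \<longleftrightarrow> (?b \<noteq> odd (card (y \<inter> V)))"
    proof -
      have e1: "y = (y \<inter> S) \<union> (y \<inter> V)" using yn unfolding V_def by auto
      have "card ((y \<inter> S) \<union> (y \<inter> V)) = card (y \<inter> S) + card (y \<inter> V)"
        by (rule card_Un_disjoint) (use fy VS in auto)
      then have "card y = card (y \<inter> S) + card (y \<inter> V)" using e1 by simp
      then show ?thesis by simp
    qed
    have dxy: "odd (card (x \<inter> y)) \<longleftrightarrow> (odd (card (x \<inter> y \<inter> S)) \<noteq> odd (card (x \<inter> y \<inter> V)))"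
    proof -
      have "x \<inter> y = (x \<inter> y \<inter> S) \<union> (x \<inter> y \<inter> V)" using xn unfolding V_def by auto
      moreover have "(x \<inter> y \<inter> S) \<inter> (x \<inter> y \<inter> V) = {}" using VS by auto
      moreover have "card ((x \<inter> y \<inter> S) \<union> (x \<inter> y \<inter> V)) = card (x \<inter> y \<inter> S) + card (x \<inter> y \<inter> V)"
        by (rule card_Un_disjoint) (use fx VS in auto)
      ultimately have "card (x \<inter> y) = card (x \<inter> y \<inter> S) + card (x \<inter> y \<inter> V)" by simp
      then show ?thesis by simp
    qed
    have ex: "odd (e x) \<longleftrightarrow> (odd (card (x \<inter> S) choose 2) \<noteq> (?a \<and> ((odd (quad n V x) \<noteq> odd (card (x \<inter> V))) \<noteq> odd (card (x \<inter> V \<inter> P)))))"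
      unfolding e_def mu_def by simp argo
    have ey: "odd (e y) \<longleftrightarrow> (odd (card (y \<inter> S) choose 2) \<noteq> (?b \<and> ((odd (quad n V y) \<noteq> odd (card (y \<inter> V))) \<noteq> odd (card (y \<inter> V \<inter> P)))))"
      unfolding e_def mu_def by simp argo
    let ?z = "zadd x y"
    have zS: "odd (card (?z \<inter> S)) \<longleftrightarrow> (?a \<noteq> ?b)" using card_zadd_Int[OF fS] by blast
    have zS2: "odd (card (?z \<inter> S) choose 2) \<longleftrightarrow>
       (((odd (card (x \<inter> S) choose 2) \<noteq> odd (card (y \<inter> S) choose 2)) \<noteq> (?a \<and> ?b)) \<noteq> odd (card (x \<inter> y \<inter> S)))"
    proof -
      have "?z \<inter> S = zadd (x \<inter> S) (y \<inter> S)" "(x \<inter> S) \<inter> (y \<inter> S) = x \<inter> y \<inter> S" by (auto simp: zadd_def)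
      then show ?thesis using choose_zadd[of "x \<inter> S" "y \<inter> S"] fS by simp
    qed
    have zq: "odd (quad n V ?z) \<longleftrightarrow> (odd (quad n V x) \<noteq> odd (quad n V y))" by (rule quad_lin2)
    have zV: "odd (card (?z \<inter> V)) \<longleftrightarrow> (odd (card (x \<inter> V)) \<noteq> odd (card (y \<inter> V)))"
      using card_zadd_Int[OF fV] by blast
    have zVP: "odd (card (?z \<inter> V \<inter> P)) \<longleftrightarrow> (odd (card (x \<inter> V \<inter> P)) \<noteq> odd (card (y \<inter> V \<inter> P)))"
      using card_zadd_Int[of "V \<inter> P" x y] fV by (simp add: Int_assoc)
    have ez: "odd (e ?z) \<longleftrightarrow> (odd (card (?z \<inter> S) choose 2) \<noteq> (odd (card (?z \<inter> S)) \<and> ((odd (quad n V ?z) \<noteq> odd (card (?z \<inter> V))) \<noteq> odd (card (?z \<inter> V \<inter> P)))))"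
      unfolding e_def mu_def by simp argo
    have key: "odd (ftw n ?P' ?X ?Y) \<longleftrightarrow> (((odd (ftw n P x y) \<noteq> odd (e x)) \<noteq> odd (e y)) \<noteq> odd (e ?z))"
      using t1 t2 cx cy cx2 cxy tq qxV tL tL2 s1 s2 dx dy dxy ex ey zS zS2 zq zV zVP ez Veven qVV oP
      by (smt (verit))
    have "\<not> odd (ftw n ?P' ?X ?Y + ftw n P x y + e x + e y + e ?z)"
      unfolding odd_add using key by (smt (verit))
    then show ?thesis unfolding sX by blast
  qed
  show ?thesis unfolding ISO_def G_def[symmetric]
    using bij lin main by blast
qed



lemma flip':
  assumes "n mod 4 = 2" "S \<subseteq> {1..n}" "card S = 4" "P \<subseteq> {1..n}" "odd (card (P - S))" "zadd P S = P'"
  shows "ISO n P P'"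
  using flip[OF assms(1-5)] assms(6) by simp

theorem mainTheorem8:
  fixes p q k :: nat
  assumes "p + q = 4 * k + 2" and "k \<ge> 1"
  shows "(odd p \<and> odd q \<and> p \<ge> 1 \<and> q \<ge> 5 \<longrightarrow> graded_iso p q (p + 4) (q - 4))
       \<and> (even p \<and> even q \<and> p \<ge> 4 \<and> q \<ge> 2 \<longrightarrow> graded_iso p q (p - 2) (q + 2))"
proof (intro conjI impI)
  define n where "n = p + q"
  have n4: "n mod 4 = 2" using assms(1) unfolding n_def by presburger
  {
    assume h: "odd p \<and> odd q \<and> p \<ge> 1 \<and> q \<ge> 5"
    have "ISO n {1..p} {1..p+4}"
    proof (rule flip'[OF n4])
      show "{p+1..p+4} \<subseteq> {1..n}" using h n_def by auto
      show "card {p+1..p+4} = 4" by simp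
      show "{1..p} \<subseteq> {1..n}" using n_def by auto
      have "{1..p} - {p+1..p+4} = {1..p}" by auto
      then show "odd (card ({1..p} - {p+1..p+4}))" using h by simp
      show "zadd {1..p} {p+1..p+4} = {1..p+4}" by (auto simp: zadd_def)
    qed
    then show "graded_iso p q (p + 4) (q - 4)"
      using ISO_graded[of p q "p+4" "q-4"] h n_def by simp
  }
  {
    assume h: "even p \<and> even q \<and> p \<ge> 4 \<and> q \<ge> 2"
    have nge: "n \<ge> p + 2" using h n_def by simp
    have "ISO n {1..p} {1..p-2}"
    proof (cases "p = 4")
      case True
      have a: "ISO n {1..p} {4,5}"
        by (rule flip'[OF n4, of "{1,2,3,5}"]) (use True nge in \<open>auto simp: zadd_def\<close>)
      have b: "ISO n {4,5} {1,3,5,6}"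
        by (rule flip'[OF n4, of "{1,3,4,6}"]) (use True nge in \<open>auto simp: zadd_def\<close>)
      have c: "ISO n {1,3,5,6} {1..p-2}"
        by (rule flip'[OF n4, of "{2,3,5,6}"]) (use True nge in \<open>auto simp: zadd_def\<close>)
      show ?thesis using ISO_trans[OF ISO_trans[OF a b] c] .
    next
      case False
      then have p6: "p \<ge> 6" using h by presburger
      have a: "ISO n {1..p} {4..p+1}"
      proof (rule flip'[OF n4, of "{1,2,3,p+1}"])
        have "{1..p} - {1,2,3,p+1} = {4..p}" using p6 by auto
        then show "odd (card ({1..p} - {1,2,3,p+1}))" using h p6 by simp
      qed (use p6 nge in \<open>auto simp: zadd_def\<close>)
      have b: "ISO n {4..p+1} ({1..p+1} - {4})"
      proof (rule flip'[OF n4, of "{1,2,3,4}"])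
        have "{4..p+1} - {1,2,3,4} = {5..p+1}" using p6 by auto
        then show "odd (card ({4..p+1} - {1,2,3,4}))" using h p6 by simp
      qed (use p6 nge in \<open>auto simp: zadd_def\<close>)
      have c: "ISO n ({1..p+1} - {4}) {1..p-2}"
      proof (rule flip'[OF n4, of "{4,p-1,p,p+1}"])
        have "({1..p+1} - {4}) - {4,p-1,p,p+1} = {1..p-2} - {4}" using p6 by auto
        moreover have "card ({1..p-2} - {4}) = p - 3" using p6 by simp
        ultimately show "odd (card (({1..p+1} - {4}) - {4,p-1,p,p+1}))" using h p6 by simp
        show "card {4, p - 1, p, p + 1} = 4" using p6 by (simp add: card_insert_if, linarith)
      qed (use p6 nge in \<open>auto simp: zadd_def\<close>)
      show ?thesis using ISO_trans[OF ISO_trans[OF a b] c] .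
    qed
    moreover have e: "p - 2 + (q + 2) = p + q" using h by linarith
    ultimately show "graded_iso p q (p - 2) (q + 2)"
      using ISO_graded[of p q "p-2" "q+2"] n_def by blast
  }
qed


end
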